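(* Let $d\ge1$, $n\ge1$ be integers and let $g$ be a real form of degree $2n$ in $d$ variables with $g(\mathbf{x})\ge0$ for all $\mathbf{x}\in\mathbb{R}^d$ and $g(\mathbf{x})=0$ only if $\mathbf{x}=0$. Let $d\mu=\exp(-g(\mathbf{x}))\,d\mathbf{x}$ on $\mathbb{R}^d$, $c_{2n}:=1+\frac{d}{2n}$, and let $\|q\|_1=\int|q|\,d\mu$ and $\|q\|_2=(\int q^2\,d\mu)^{1/2}$ denote the $L^1(\mu)$- and $L^2(\mu)$-norms. Let $\mathcal{H}_{2n}$ be the space of real forms of degree $2n$ in $d$ variables. Then: (i) the problem $\min_{q\in\mathcal{H}_{2n}}\|q-1\|_2^2$ has a unique minimizer $q^*$, and $g=c_{2n}\,q^*$; (ii) $g$ is a minimizer of $\min_{q\in\mathcal{H}_{2n}}\{\|q\|_2:\ \|q\|_1=\|g\|_1\}$. *)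

theory Defs
  imports "HOL-Analysis.Analysis"
begin

definition monomial :: "('d::finite \<Rightarrow> nat) \<Rightarrow> real^'d \<Rightarrow> real" where
  "monomial \<alpha> x = (\<Prod>i\<in>UNIV. (x $ i) ^ (\<alpha> i))"

text \<open>The space H_m of real forms (homogeneous polynomials) of degree m in d = CARD('d) variables,
  viewed as polynomial functions on R^d.\<close>
definition forms :: "nat \<Rightarrow> (real^'d::finite \<Rightarrow> real) set" where
  "forms m = {q. \<exists>c :: ('d \<Rightarrow> nat) \<Rightarrow> real.
      q = (\<lambda>x. \<Sum>\<alpha>\<in>{\<alpha>. sum \<alpha> UNIV = m}. c \<alpha> * monomial \<alpha> x)}"

definition mu :: "(real^'d::finite \<Rightarrow> real) \<Rightarrow> (real^'d) measure" where
  "mu g = density lborel (\<lambda>x. ennreal (exp (- g x)))"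

definition L1norm :: "(real^'d::finite \<Rightarrow> real) \<Rightarrow> (real^'d \<Rightarrow> real) \<Rightarrow> real" where
  "L1norm g q = integral\<^sup>L (mu g) (\<lambda>x. \<bar>q x\<bar>)"

definition L2norm :: "(real^'d::finite \<Rightarrow> real) \<Rightarrow> (real^'d \<Rightarrow> real) \<Rightarrow> real" where
  "L2norm g q = sqrt (integral\<^sup>L (mu g) (\<lambda>x. (q x)\<^sup>2))"

end

theory Submission
  imports Defs
begin


lemma monomial_scale: "monomial \<alpha> (t *\<^sub>R x) = t ^ (sum \<alpha> UNIV) * monomial \<alpha> x"
  unfolding monomial_def by (simp add: power_mult_distrib prod.distrib power_sum)

lemma forms_hom:
  assumes "q \<in> forms m" shows "q (t *\<^sub>R x) = t ^ m * q x"
proof -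
  from assms obtain c where q: "q = (\<lambda>x. \<Sum>\<alpha>\<in>{\<alpha>. sum \<alpha> UNIV = m}. c \<alpha> * monomial \<alpha> x)"
    unfolding forms_def by blast
  show ?thesis unfolding q by (simp add: monomial_scale sum_distrib_left mult.left_commute)
qed

lemma forms_zero: assumes "q \<in> forms m" "m \<ge> 1" shows "q 0 = 0"
  using forms_hom[OF assms(1), of 0 0] assms(2) by (cases m) auto

lemma forms_cont:
  assumes "q \<in> forms m" shows "continuous_on UNIV q"
proof -
  from assms obtain c where q: "q = (\<lambda>x. \<Sum>\<alpha>\<in>{\<alpha>. sum \<alpha> UNIV = m}. c \<alpha> * monomial \<alpha> x)"
    unfolding forms_def by blast
  show ?thesis unfolding q monomial_def by (intro continuous_intros)
qed

lemma forms_meas [measurable]: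
  assumes "q \<in> forms m" shows "q \<in> borel_measurable borel"
  using forms_cont[OF assms] by (simp add: borel_measurable_continuous_onI)

lemma forms_diff:
  assumes "q \<in> forms m" "p \<in> forms m" shows "(\<lambda>x. q x - p x) \<in> forms m"
proof -
  from assms obtain c c' where q: "q = (\<lambda>x. \<Sum>\<alpha>\<in>{\<alpha>. sum \<alpha> UNIV = m}. c \<alpha> * monomial \<alpha> x)"
    and p: "p = (\<lambda>x. \<Sum>\<alpha>\<in>{\<alpha>. sum \<alpha> UNIV = m}. c' \<alpha> * monomial \<alpha> x)"
    unfolding forms_def by blast
  show ?thesis unfolding forms_def q p
    by (rule CollectI, rule exI[of _ "\<lambda>\<alpha>. c \<alpha> - c' \<alpha>"]) (simp add: sum_subtractf left_diff_distrib)
qed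

lemma forms_scale:
  assumes "q \<in> forms m" shows "(\<lambda>x. a * q x) \<in> forms m"
proof -
  from assms obtain c where q: "q = (\<lambda>x. \<Sum>\<alpha>\<in>{\<alpha>. sum \<alpha> UNIV = m}. c \<alpha> * monomial \<alpha> x)"
    unfolding forms_def by blast
  show ?thesis unfolding forms_def q
    by (rule CollectI, rule exI[of _ "\<lambda>\<alpha>. a * c \<alpha>"]) (simp add: sum_distrib_left mult.assoc)
qed



lemma sphere_decomp:
  fixes x :: "'a::real_normed_vector"
  assumes "x \<noteq> 0" shows "x = norm x *\<^sub>R (x /\<^sub>R norm x)" "x /\<^sub>R norm x \<in> sphere 0 1"
  using assms by (auto simp: norm_divide)

lemma g_min_sphere:
  fixes g :: "real^'d::finite \<Rightarrow> real"
  assumes g: "g \<in> forms (2*n)" and nn: "\<And>x. g x \<ge> 0" and pos: "\<And>x. g x = 0 \<Longrightarrow> x = 0"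
  obtains u where "u \<in> sphere 0 1" "\<And>y. y \<in> sphere 0 1 \<Longrightarrow> g u \<le> g y" "g u > 0"
proof -
  have ne: "sphere (0::real^'d) 1 \<noteq> {}" by simp
  obtain u where u: "u \<in> sphere 0 1" "\<And>y. y \<in> sphere 0 1 \<Longrightarrow> g u \<le> g y"
    using continuous_attains_inf[OF compact_sphere ne continuous_on_subset[OF forms_cont[OF g]]] by blast
  have "u \<noteq> 0" using u by auto
  hence "g u > 0" using pos nn[of u] by force
  thus ?thesis using u that by blast
qed

lemma form_le_g:
  fixes g q :: "real^'d::finite \<Rightarrow> real"
  assumes n: "n \<ge> 1" and g: "g \<in> forms (2*n)" and nn: "\<And>x. g x \<ge> 0" and pos: "\<And>x. g x = 0 \<Longrightarrow> x = 0"
    and q: "q \<in> forms (2*n)"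
  shows "\<exists>K\<ge>0. \<forall>x. \<bar>q x\<bar> \<le> K * g x"
proof -
  have ne: "sphere (0::real^'d) 1 \<noteq> {}" by simp
  obtain u where u: "u \<in> sphere 0 1" "\<And>y. y \<in> sphere 0 1 \<Longrightarrow> g u \<le> g y" and gu: "g u > 0"
    using g_min_sphere[OF g nn pos] by blast
  have cq: "continuous_on UNIV (\<lambda>x. \<bar>q x\<bar>)" using forms_cont[OF q] by (intro continuous_intros)
  obtain v where v: "v \<in> sphere 0 1" "\<And>y. y \<in> sphere 0 1 \<Longrightarrow> \<bar>q y\<bar> \<le> \<bar>q v\<bar>"
    using continuous_attains_sup[OF compact_sphere ne continuous_on_subset[OF cq]]
    by blast
  define K where "K = \<bar>q v\<bar> / g u"
  have K0: "K \<ge> 0" unfolding K_def using gu by simp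
  have "\<bar>q x\<bar> \<le> K * g x" for x
  proof (cases "x = 0")
    case True thus ?thesis using forms_zero[OF q] forms_zero[OF g] n by simp
  next
    case False
    define w where "w = x /\<^sub>R norm x"
    have w: "w \<in> sphere 0 1" "x = norm x *\<^sub>R w" using sphere_decomp[OF False] w_def by auto
    have qx: "q x = norm x ^ (2*n) * q w" and gx: "g x = norm x ^ (2*n) * g w"
      using forms_hom[OF q, of "norm x" w] forms_hom[OF g, of "norm x" w] w by auto
    have "\<bar>q w\<bar> \<le> K * g w"
    proof -
      have "\<bar>q w\<bar> \<le> \<bar>q v\<bar>" using v w by auto
      also have "\<dots> = K * g u" unfolding K_def using gu by simp
      also have "\<dots> \<le> K * g w" using u(2)[OF w(1)] K0 by (simp add: mult_left_mono)
      finally show ?thesis .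
    qed
    hence "norm x ^ (2*n) * \<bar>q w\<bar> \<le> norm x ^ (2*n) * (K * g w)" by (simp add: mult_left_mono)
    thus ?thesis unfolding qx gx by (simp add: abs_mult mult.left_commute)
  qed
  thus ?thesis using K0 by blast
qed

lemma g_ge_norm:
  fixes g :: "real^'d::finite \<Rightarrow> real"
  assumes n: "n \<ge> 1" and g: "g \<in> forms (2*n)" and nn: "\<And>x. g x \<ge> 0" and pos: "\<And>x. g x = 0 \<Longrightarrow> x = 0"
  shows "\<exists>l>0. \<forall>x. l * norm x ^ (2*n) \<le> g x"
proof -
  obtain u where u: "u \<in> sphere 0 1" "\<And>y. y \<in> sphere 0 1 \<Longrightarrow> g u \<le> g y" and gu: "g u > 0"
    using g_min_sphere[OF g nn pos] by blast
  have "g u * norm x ^ (2*n) \<le> g x" for x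
  proof (cases "x = 0")
    case True thus ?thesis using nn[of 0] n by (cases n) auto
  next
    case False
    define w where "w = x /\<^sub>R norm x"
    have w: "w \<in> sphere 0 1" "x = norm x *\<^sub>R w" using sphere_decomp[OF False] w_def by auto
    have gx: "g x = norm x ^ (2*n) * g w"
      using forms_hom[OF g, of "norm x" w] w by auto
    show ?thesis unfolding gx using u(2)[OF w(1)] by (simp add: mult_right_mono mult.commute)
  qed
  thus ?thesis using gu by blast
qed



lemma nn_scale:
  fixes f :: "real^'d::finite \<Rightarrow> ennreal"
  assumes [measurable]: "f \<in> borel_measurable borel" and t: "t > 0"
  shows "(\<integral>\<^sup>+x. f x \<partial>lborel) = ennreal (t ^ CARD('d)) * (\<integral>\<^sup>+x. f (t *\<^sub>R x) \<partial>lborel)"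
  using t
  by (subst (1) lborel_affine[of t 0]) (auto simp: nn_integral_density nn_integral_distr nn_integral_cmult)

lemma exp_tends:
  fixes a b :: real assumes "a > 0"
  shows "((\<lambda>l. b * exp (- (l * a))) \<longlongrightarrow> 0) at_top"
proof -
  have "filterlim (\<lambda>l. a * l) at_top at_top"
    by (rule filterlim_tendsto_pos_mult_at_top[OF tendsto_const assms filterlim_ident])
  hence "filterlim (\<lambda>l. - (l * a)) at_bot at_top"
    by (simp add: filterlim_uminus_at_bot mult.commute)
  hence "((\<lambda>l. exp (- (l * a))) \<longlongrightarrow> 0) at_top"
    using exp_at_bot filterlim_compose by blast
  thus ?thesis by (simp add: tendsto_mult_right_zero)
qed

lemma layer1:
  fixes a b :: real assumes "a > 0" "b \<ge> 0"
  shows "ennreal (b * exp (- a)) = (\<integral>\<^sup>+l. ennreal (b * a * exp (- (l * a))) * indicator {1..} l \<partial>lborel)"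
proof -
  have "(\<integral>\<^sup>+l. ennreal (b * a * exp (- (l * a))) * indicator {1..} l \<partial>lborel) = ennreal (0 - (- b * exp (- (1 * a))))"
    by (rule nn_integral_FTC_atLeast)
       (use assms exp_tends[OF assms(1), of "-b"] in \<open>auto intro!: derivative_eq_intros\<close>)
  thus ?thesis by simp
qed

lemma layer2:
  fixes s :: real assumes "s > 0"
  shows "(\<integral>\<^sup>+l. ennreal (l powr (- (s + 1))) * indicator {1..} l \<partial>lborel) = ennreal (1 / s)"
proof -
  have "(\<integral>\<^sup>+l. ennreal (l powr (- (s + 1))) * indicator {1..} l \<partial>lborel) = ennreal (0 - (- (1 powr (-s)) / s))"
  proof (rule nn_integral_FTC_atLeast)
    show "((\<lambda>l. - (l powr (-s)) / s) \<longlongrightarrow> 0) at_top"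
    proof -
      have "((\<lambda>l. l powr (-s) / s) \<longlongrightarrow> 0) at_top"
        using tendsto_neg_powr[OF _ filterlim_ident, of "-s"] assms by (auto intro: tendsto_divide_zero)
      from tendsto_minus[OF this] show ?thesis by simp
    qed
    fix x :: real assume x: "1 \<le> x"
    show "((\<lambda>l. - (l powr (-s)) / s) has_real_derivative x powr (- (s + 1))) (at x)"
      using x assms by (auto intro!: derivative_eq_intros simp: powr_diff powr_minus field_simps powr_add)
  qed auto
  thus ?thesis by simp
qed



lemma key_identity:
  fixes g F :: "real^'d::finite \<Rightarrow> real"
  assumes n: "n \<ge> 1" and g: "g \<in> forms (2*n)" and nn: "\<And>x. g x \<ge> 0" and pos: "\<And>x. g x = 0 \<Longrightarrow> x = 0"
    and Fm[measurable]: "F \<in> borel_measurable borel" and Fnn: "\<And>x. F x \<ge> 0"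
    and Fh: "\<And>t x. t > 0 \<Longrightarrow> F (t *\<^sub>R x) = t ^ m * F x"
  shows "(\<integral>\<^sup>+x. ennreal (F x * g x * exp (- g x)) \<partial>lborel)
         = ennreal ((real CARD('d) + real m) / (2 * real n)) * (\<integral>\<^sup>+x. ennreal (F x * exp (- g x)) \<partial>lborel)"
proof -
  note gm[measurable] = forms_meas[OF g]
  define s where "s = (real CARD('d) + real m) / (2 * real n)"
  have s0: "s > 0" unfolding s_def using n by (auto intro!: divide_pos_pos add_pos_nonneg)
  define J where "J = (\<integral>\<^sup>+x. ennreal (F x * g x * exp (- g x)) \<partial>lborel)"
  have inner: "(\<integral>\<^sup>+x. ennreal (F x * g x * exp (- (l * g x))) \<partial>lborel) = ennreal (l powr (- (s + 1))) * J"
    if l: "l \<ge> 1" for l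
  proof -
    define t where "t = l powr (- 1 / (2*n))"
    have t0: "t > 0" unfolding t_def using l by simp
    have t2n: "t ^ (2*n) = 1 / l"
      unfolding t_def using l n by (simp add: powr_realpow[symmetric] powr_powr powr_minus field_simps)
    have tpow: "t ^ (CARD('d) + m + 2*n) = l powr (- (s + 1))"
      unfolding t_def s_def using l n
      by (simp add: powr_realpow[symmetric] powr_powr field_simps)
    have "(\<integral>\<^sup>+x. ennreal (F x * g x * exp (- (l * g x))) \<partial>lborel)
        = ennreal (t ^ CARD('d)) * (\<integral>\<^sup>+x. ennreal (F (t *\<^sub>R x) * g (t *\<^sub>R x) * exp (- (l * g (t *\<^sub>R x)))) \<partial>lborel)"
      by (rule nn_scale[OF _ t0]) measurable
    also have "(\<lambda>x. ennreal (F (t *\<^sub>R x) * g (t *\<^sub>R x) * exp (- (l * g (t *\<^sub>R x)))))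
              = (\<lambda>x. ennreal (t ^ (m + 2*n)) * ennreal (F x * g x * exp (- g x)))"
    proof
      fix x
      have "F (t *\<^sub>R x) * g (t *\<^sub>R x) * exp (- (l * g (t *\<^sub>R x))) = t ^ (m + 2*n) * (F x * g x * exp (- g x))"
        using Fh[OF t0] forms_hom[OF g] t2n l by (simp add: power_add)
      thus "ennreal (F (t *\<^sub>R x) * g (t *\<^sub>R x) * exp (- (l * g (t *\<^sub>R x)))) = ennreal (t ^ (m + 2*n)) * ennreal (F x * g x * exp (- g x))"
        using t0 Fnn[of x] nn[of x] by (simp add: ennreal_mult)
    qed
    also have "ennreal (t ^ CARD('d)) * (\<integral>\<^sup>+x. ennreal (t ^ (m + 2*n)) * ennreal (F x * g x * exp (- g x)) \<partial>lborel)
        = ennreal (t ^ (CARD('d) + m + 2*n)) * J"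
      unfolding J_def using t0 by (simp add: nn_integral_cmult ennreal_mult power_add mult.assoc)
    finally show ?thesis unfolding tpow .
  qed
  have "(\<integral>\<^sup>+x. ennreal (F x * exp (- g x)) \<partial>lborel)
      = (\<integral>\<^sup>+x. \<integral>\<^sup>+l. ennreal (F x * g x * exp (- (l * g x))) * indicator {1..} l \<partial>lborel \<partial>lborel)"
  proof (rule nn_integral_cong_AE)
    show "AE x in lborel. ennreal (F x * exp (- g x)) = (\<integral>\<^sup>+l. ennreal (F x * g x * exp (- (l * g x))) * indicator {1..} l \<partial>lborel)"
    proof (rule eventually_mono[OF AE_lborel_singleton[of 0]])
      fix x :: "real^'d" assume "x \<noteq> 0"
      hence "g x > 0" using nn[of x] pos[of x] by force
      from layer1[OF this Fnn[of x]] show "ennreal (F x * exp (- g x)) = (\<integral>\<^sup>+l. ennreal (F x * g x * exp (- (l * g x))) * indicator {1..} l \<partial>lborel)"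
        by simp
    qed
  qed
  also have "\<dots> = (\<integral>\<^sup>+l. \<integral>\<^sup>+x. ennreal (F x * g x * exp (- (l * g x))) * indicator {1..} l \<partial>lborel \<partial>lborel)"
    by (rule lborel_pair.Fubini'[symmetric, where f="\<lambda>x l. ennreal (F x * g x * exp (- (l * g x))) * indicator {1..} l", simplified])
       measurable
  also have "\<dots> = (\<integral>\<^sup>+l. ennreal (l powr (- (s + 1))) * indicator {1..} l * J \<partial>lborel)"
    by (rule nn_integral_cong) (auto simp: nn_integral_multc inner indicator_def)
  also have "\<dots> = (\<integral>\<^sup>+l. ennreal (l powr (- (s + 1))) * indicator {1..} l \<partial>lborel) * J"
    by (rule nn_integral_multc) measurable
  also have "\<dots> = ennreal (1 / s) * J"
    by (simp only: layer2[OF s0])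
  finally have "(\<integral>\<^sup>+x. ennreal (F x * exp (- g x)) \<partial>lborel) = ennreal (1 / s) * J" .
  hence "ennreal s * (\<integral>\<^sup>+x. ennreal (F x * exp (- g x)) \<partial>lborel) = ennreal s * ennreal (1 / s) * J"
    by (simp add: mult.assoc)
  also have "ennreal s * ennreal (1 / s) = 1" using s0 by (simp add: ennreal_mult[symmetric])
  finally show ?thesis unfolding J_def s_def by simp
qed



lemma layer0:
  fixes a :: real
  shows "ennreal (exp (- a)) = (\<integral>\<^sup>+u. ennreal (exp (- u)) * indicator {a..} u \<partial>lborel)"
proof -
  have "(\<integral>\<^sup>+u. ennreal (exp (- u)) * indicator {a..} u \<partial>lborel) = ennreal (0 - (- exp (- a)))"
  proof (rule nn_integral_FTC_atLeast)
    show "((\<lambda>u::real. - exp (- u)) \<longlongrightarrow> 0) at_top"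
    proof -
      have "((\<lambda>u::real. exp (- u)) \<longlongrightarrow> 0) at_top" using exp_tends[of 1 1] by simp
      from tendsto_minus[OF this] show ?thesis by simp
    qed
  qed (auto intro!: derivative_eq_intros)
  thus ?thesis by simp
qed

lemma M_finite:
  fixes g :: "real^'d::finite \<Rightarrow> real"
  assumes n: "n \<ge> 1" and g: "g \<in> forms (2*n)" and nn: "\<And>x. g x \<ge> 0" and pos: "\<And>x. g x = 0 \<Longrightarrow> x = 0"
  shows "(\<integral>\<^sup>+x. ennreal (exp (- g x)) \<partial>lborel) < \<infinity>"
proof -
  note gm[measurable] = forms_meas[OF g]
  define s where "s = CARD('d) / (2*n)"
  have s0: "s > 0" unfolding s_def using n by auto
  define V where "V = emeasure lborel {x. g x \<le> 1}"
  obtain l where l: "l > 0" "\<And>x. l * norm x ^ (2*n) \<le> g x" using g_ge_norm[OF n g nn pos] by blast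
  have "bounded {x. g x \<le> 1}"
    unfolding bounded_iff
  proof (intro exI ballI)
    fix x assume "x \<in> {x. g x \<le> 1}"
    hence "l * norm x ^ (2*n) \<le> 1" using l(2)[of x] by simp
    show "norm x \<le> 1 + 1 / l"
    proof (cases "norm x \<le> 1")
      case False
      hence "norm x \<le> norm x ^ (2*n)" using n by (simp add: self_le_power)
      also have "\<dots> \<le> 1 / l" using \<open>l * norm x ^ (2*n) \<le> 1\<close> l(1) by (simp add: field_simps)
      finally show ?thesis using l(1) by simp
    next
      case True
      have "0 < 1 / l" using l(1) by simp
      thus ?thesis using True by linarith
    qed
  qed
  hence Vfin: "V < \<infinity>" unfolding V_def by (rule emeasure_bounded_finite)
  have inner: "(\<integral>\<^sup>+x. (if g x \<le> u then ennreal (exp (- u)) else 0) \<partial>lborel)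
      = ennreal (indicator {0..} u * u powr s / exp u) * V" if u: "u \<noteq> 0" for u
  proof (cases "u > 0")
    case False
    hence "u < 0" using u by simp
    hence "\<And>x. \<not> g x \<le> u" using nn by (auto simp: not_le intro: less_le_trans)
    thus ?thesis using \<open>u < 0\<close> by simp
  next
    case True
    define t where "t = u powr (1 / (2*n))"
    have t0: "t > 0" unfolding t_def using True by simp
    have t2n: "t ^ (2*n) = u"
      unfolding t_def using True n by (simp add: powr_realpow[symmetric] powr_powr)
    have td: "t ^ CARD('d) = u powr s"
      unfolding t_def s_def using True n by (simp add: powr_realpow[symmetric] powr_powr)
    have "(\<integral>\<^sup>+x. (if g x \<le> u then ennreal (exp (- u)) else 0) \<partial>lborel)
        = ennreal (exp (- u)) * (\<integral>\<^sup>+x. indicator {x. g x \<le> u} x \<partial>lborel)"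
      by (subst nn_integral_cmult[symmetric]) (auto intro!: nn_integral_cong simp: indicator_def)
    also have "(\<integral>\<^sup>+x. indicator {x. g x \<le> u} x \<partial>lborel)
        = ennreal (t ^ CARD('d)) * (\<integral>\<^sup>+x. indicator {x. g x \<le> u} (t *\<^sub>R x) \<partial>lborel)"
      by (rule nn_scale[OF _ t0]) measurable
    also have "(\<lambda>x. indicator {x. g x \<le> u} (t *\<^sub>R x) :: ennreal) = indicator {x. g x \<le> 1}"
      using forms_hom[OF g, of t] t2n True by (auto simp: indicator_def fun_eq_iff)
    also have "(\<integral>\<^sup>+x. indicator {x. g x \<le> 1} x \<partial>lborel) = V"
      unfolding V_def by (rule nn_integral_indicator) measurable
    finally have *: "(\<integral>\<^sup>+x. (if g x \<le> u then ennreal (exp (- u)) else 0) \<partial>lborel)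
        = ennreal (exp (- u)) * (ennreal (t ^ CARD('d)) * V)" .
    have "ennreal (indicator {0..} u * u powr s / exp u) = ennreal (exp (- u)) * ennreal (t ^ CARD('d))"
      using True t0 td by (simp add: ennreal_mult[symmetric] exp_minus divide_inverse mult.commute)
    thus ?thesis using * by (simp add: mult.assoc)
  qed
  have "(\<integral>\<^sup>+x. ennreal (exp (- g x)) \<partial>lborel)
      = (\<integral>\<^sup>+x. \<integral>\<^sup>+u. (if g x \<le> u then ennreal (exp (- u)) else 0) \<partial>lborel \<partial>lborel)"
    by (rule nn_integral_cong) (subst layer0, auto intro!: nn_integral_cong simp: indicator_def)
  also have "\<dots> = (\<integral>\<^sup>+u. \<integral>\<^sup>+x. (if g x \<le> u then ennreal (exp (- u)) else 0) \<partial>lborel \<partial>lborel)"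
    by (rule lborel_pair.Fubini'[symmetric, where f="\<lambda>x u. (if g x \<le> u then ennreal (exp (- u)) else 0)", simplified])
       measurable
  also have "\<dots> = (\<integral>\<^sup>+u. ennreal (indicator {0..} u * u powr s / exp u) * V \<partial>lborel)"
    by (intro nn_integral_cong_AE eventually_mono[OF AE_lborel_singleton[of 0]] inner)
  also have "\<dots> = (\<integral>\<^sup>+u. ennreal (indicator {0..} u * u powr s / exp u) \<partial>lborel) * V"
    by (rule nn_integral_multc) measurable
  also have "\<dots> = ennreal (Gamma (s + 1)) * V"
    using Gamma_conv_nn_integral_real[of "s + 1"] s0 by simp
  also have "\<dots> < \<infinity>" using Vfin by (simp add: ennreal_mult_less_top)
  finally show ?thesis .
qed



lemma cont_AE_zero:
  fixes f :: "real^'d::finite \<Rightarrow> real"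
  assumes c: "continuous_on UNIV f" and ae: "AE x in lborel. f x = 0"
  shows "f x = 0"
proof (rule ccontr)
  assume "f x \<noteq> 0"
  have fm[measurable]: "f \<in> borel_measurable borel" using c by (simp add: borel_measurable_continuous_onI)
  have op: "open {x. f x \<noteq> 0}"
    using c by (simp add: continuous_on_open_vimage open_Collect_neq continuous_on_const)
  have "{x \<in> space lborel. \<not> f x = 0} \<in> null_sets lborel"
    using ae by (subst (asm) AE_iff_null) auto
  hence "{x. f x \<noteq> 0} \<in> null_sets lborel" by simp
  hence "{x. f x \<noteq> 0} \<in> null_sets lebesgue"
    by (simp add: null_sets_completionI)
  hence "negligible {x. f x \<noteq> 0}" by (simp add: negligible_iff_null_sets)
  moreover have "{x. f x \<noteq> 0} \<noteq> {}" using \<open>f x \<noteq> 0\<close> by auto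
  ultimately show False using open_not_negligible[OF op] by blast
qed



context
  fixes g :: "real^'d::finite \<Rightarrow> real" and n :: nat
  assumes n: "n \<ge> 1" and g: "g \<in> forms (2*n)" and nn: "\<And>x. g x \<ge> 0" and pos: "\<And>x. g x = 0 \<Longrightarrow> x = 0"
begin

lemma gm[measurable]: "g \<in> borel_measurable borel" using forms_meas[OF g] .

lemma int_e: "integrable lborel (\<lambda>x. exp (- g x))"
  by (rule integrableI_bounded) (use M_finite[OF n g nn pos] in auto)

lemma nn_g2e_fin: "(\<integral>\<^sup>+x. ennreal (g x * g x * exp (- g x)) \<partial>lborel) < \<infinity>"
proof -
  have "(\<integral>\<^sup>+x. ennreal (g x * g x * exp (- g x)) \<partial>lborel)
     = ennreal ((real CARD('d) + real (2*n)) / (2 * real n)) * (\<integral>\<^sup>+x. ennreal (g x * exp (- g x)) \<partial>lborel)"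
    by (rule key_identity[OF n g nn pos]) (use nn forms_hom[OF g] in auto)
  also have "(\<integral>\<^sup>+x. ennreal (g x * exp (- g x)) \<partial>lborel) = (\<integral>\<^sup>+x. ennreal (1 * g x * exp (- g x)) \<partial>lborel)"
    by simp
  also have "\<dots> = ennreal ((real CARD('d) + real 0) / (2 * real n)) * (\<integral>\<^sup>+x. ennreal (1 * exp (- g x)) \<partial>lborel)"
    by (rule key_identity[OF n g nn pos]) auto
  finally show ?thesis using M_finite[OF n g nn pos] by (simp add: ennreal_mult_less_top)
qed

lemma int_g2e: "integrable lborel (\<lambda>x. g x ^ 2 * exp (- g x))"
  by (rule integrableI_bounded) (use nn_g2e_fin in \<open>auto simp: power2_eq_square\<close>)

lemma int_bound:
  assumes [measurable]: "f \<in> borel_measurable borel" and C: "C \<ge> 0" and b: "\<And>x. \<bar>f x\<bar> \<le> C * (1 + g x ^ 2)"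
  shows "integrable lborel (\<lambda>x. f x * exp (- g x))"
proof (rule Bochner_Integration.integrable_bound)
  show "integrable lborel (\<lambda>x. C * (exp (- g x) + g x ^ 2 * exp (- g x)))"
    using int_e int_g2e by auto
  show "AE x in lborel. norm (f x * exp (- g x)) \<le> norm (C * (exp (- g x) + g x ^ 2 * exp (- g x)))"
  proof (intro AE_I2)
    fix x
    have "\<bar>f x\<bar> * exp (- g x) \<le> C * (1 + g x ^ 2) * exp (- g x)" using b[of x] by (simp add: mult_right_mono)
    thus "norm (f x * exp (- g x)) \<le> norm (C * (exp (- g x) + g x ^ 2 * exp (- g x)))"
      using C by (simp add: abs_mult algebra_simps)
  qed
qed measurable

lemma form_bound2:
  assumes "p \<in> forms (2*n)" shows "\<exists>K\<ge>0. \<forall>x. \<bar>p x\<bar> \<le> K * (1 + g x ^ 2)"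
proof -
  obtain K where K: "K \<ge> 0" "\<And>x. \<bar>p x\<bar> \<le> K * g x" using form_le_g[OF n g nn pos assms] by blast
  have "g x \<le> 1 + g x ^ 2" for x
  proof -
    have "0 \<le> (g x - 1/2)^2 + 3/4" by (simp add: add_nonneg_nonneg)
    thus ?thesis by (simp add: power2_eq_square algebra_simps)
  qed
  hence "\<bar>p x\<bar> \<le> K * (1 + g x ^ 2)" for x using K by (meson mult_left_mono order_trans)
  thus ?thesis using K by blast
qed

lemma key_real:
  assumes Fm[measurable]: "F \<in> borel_measurable borel" and Fnn: "\<And>x. F x \<ge> 0"
    and Fh: "\<And>t x. t > 0 \<Longrightarrow> F (t *\<^sub>R x) = t ^ m * F x"
    and i1: "integrable lborel (\<lambda>x. F x * exp (- g x))"
    and i2: "integrable lborel (\<lambda>x. F x * g x * exp (- g x))"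
  shows "(\<integral>x. F x * g x * exp (- g x) \<partial>lborel) = (real CARD('d) + real m) / (2 * real n) * (\<integral>x. F x * exp (- g x) \<partial>lborel)"
proof -
  have "ennreal (\<integral>x. F x * g x * exp (- g x) \<partial>lborel) = (\<integral>\<^sup>+x. ennreal (F x * g x * exp (- g x)) \<partial>lborel)"
    by (rule nn_integral_eq_integral[symmetric, OF i2]) (use Fnn nn in auto)
  also have "\<dots> = ennreal ((real CARD('d) + real m) / (2 * real n)) * (\<integral>\<^sup>+x. ennreal (F x * exp (- g x)) \<partial>lborel)"
    by (rule key_identity[OF n g nn pos Fm Fnn Fh])
  also have "(\<integral>\<^sup>+x. ennreal (F x * exp (- g x)) \<partial>lborel) = ennreal (\<integral>x. F x * exp (- g x) \<partial>lborel)"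
    by (rule nn_integral_eq_integral[OF i1]) (use Fnn in auto)
  also have "ennreal ((real CARD('d) + real m) / (2 * real n)) * ennreal (\<integral>x. F x * exp (- g x) \<partial>lborel)
     = ennreal ((real CARD('d) + real m) / (2 * real n) * (\<integral>x. F x * exp (- g x) \<partial>lborel))"
    by (rule ennreal_mult[symmetric]) (use Fnn in \<open>auto intro!: integral_nonneg_AE\<close>)
  finally show ?thesis
    by (subst (asm) ennreal_inj) (use Fnn nn in \<open>auto intro!: integral_nonneg_AE mult_nonneg_nonneg\<close>)
qed

end



context
  fixes g :: "real^'d::finite \<Rightarrow> real" and n :: nat
  assumes n: "n \<ge> 1" and g: "g \<in> forms (2*n)" and nn: "\<And>x. g x \<ge> 0" and pos: "\<And>x. g x = 0 \<Longrightarrow> x = 0"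
begin

lemma gm'[measurable]: "g \<in> borel_measurable borel" using forms_meas[OF g] .

lemma mu_int:
  assumes [measurable]: "f \<in> borel_measurable borel"
  shows "integral\<^sup>L (mu g) f = (\<integral>x. f x * exp (- g x) \<partial>lborel)"
  unfolding mu_def by (subst integral_density) (auto simp: mult.commute)

lemma int_prod:
  assumes p: "p \<in> forms (2*n)" and p': "p' \<in> forms (2*n)"
  shows "integrable lborel (\<lambda>x. p x * p' x * exp (- g x))"
proof -
  obtain K where K: "K \<ge> 0" "\<And>x. \<bar>p x\<bar> \<le> K * g x" using form_le_g[OF n g nn pos p] by blast
  obtain K' where K': "K' \<ge> 0" "\<And>x. \<bar>p' x\<bar> \<le> K' * g x" using form_le_g[OF n g nn pos p'] by blast
  note [measurable] = forms_meas[OF p] forms_meas[OF p']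
  show ?thesis
  proof (rule int_bound[OF n g nn pos, of _ "K * K'"])
    fix x
    have "\<bar>p x * p' x\<bar> \<le> (K * g x) * (K' * g x)"
      unfolding abs_mult using K K' nn[of x] by (intro mult_mono) auto
    also have "\<dots> \<le> K * K' * (1 + g x ^ 2)" using K K' by (simp add: power2_eq_square mult_ac mult_left_mono)
    finally show "\<bar>p x * p' x\<bar> \<le> K * K' * (1 + g x ^ 2)" .
  qed (use K K' in auto)
qed

lemma int_form:
  assumes p: "p \<in> forms (2*n)"
  shows "integrable lborel (\<lambda>x. p x * exp (- g x))"
proof -
  obtain K where K: "K \<ge> 0" "\<And>x. \<bar>p x\<bar> \<le> K * (1 + g x ^ 2)" using form_bound2[OF n g nn pos p] by blast
  show ?thesis by (rule int_bound[OF n g nn pos forms_meas[OF p] K])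
qed

lemma form_identity:
  assumes r: "r \<in> forms (2*n)"
  shows "(\<integral>x. r x * g x * exp (- g x) \<partial>lborel) = (1 + real CARD('d) / (2 * real n)) * (\<integral>x. r x * exp (- g x) \<partial>lborel)"
proof -
  note [measurable] = forms_meas[OF r]
  obtain K where K: "K \<ge> 0" "\<And>x. \<bar>r x\<bar> \<le> K * g x" using form_le_g[OF n g nn pos r] by blast
  have g1: "g x \<le> 1 + g x ^ 2" for x
  proof -
    have "0 \<le> (g x - 1/2)^2 + 3/4" by (simp add: add_nonneg_nonneg)
    thus ?thesis by (simp add: power2_eq_square algebra_simps)
  qed
  have cc: "(real CARD('d) + real (2*n)) / (2 * real n) = 1 + real CARD('d) / (2 * real n)"
    using n by (simp add: field_simps)
  have part: "(\<integral>x. F x * g x * exp (- g x) \<partial>lborel) = (1 + real CARD('d) / (2 * real n)) * (\<integral>x. F x * exp (- g x) \<partial>lborel)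
     \<and> integrable lborel (\<lambda>x. F x * exp (- g x)) \<and> integrable lborel (\<lambda>x. F x * g x * exp (- g x))"
    if Fm[measurable]: "F \<in> borel_measurable borel" and Fnn: "\<And>x. F x \<ge> 0" and Fle: "\<And>x. F x \<le> \<bar>r x\<bar>"
      and Fh: "\<And>t x. t > 0 \<Longrightarrow> F (t *\<^sub>R x) = t ^ (2*n) * F x" for F
  proof -
    have i1: "integrable lborel (\<lambda>x. F x * exp (- g x))"
    proof (rule int_bound[OF n g nn pos Fm, of K])
      fix x show "\<bar>F x\<bar> \<le> K * (1 + g x ^ 2)"
      proof -
        have "K * g x \<le> K * (1 + g x ^ 2)" using g1[of x] K(1) by (rule mult_left_mono)
        thus ?thesis using Fnn[of x] Fle[of x] K(2)[of x] by simp
      qed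
    qed (use K in auto)
    have i2: "integrable lborel (\<lambda>x. F x * g x * exp (- g x))"
    proof (rule int_bound[OF n g nn pos, of _ "K"])
      fix x
      have "\<bar>F x * g x\<bar> \<le> (K * g x) * g x"
        using Fnn[of x] Fle[of x] K(2)[of x] nn[of x] by (simp add: abs_mult mult_right_mono)
      also have "\<dots> \<le> K * (1 + g x ^ 2)" using K(1) by (simp add: power2_eq_square mult_left_mono mult.assoc)
      finally show "\<bar>F x * g x\<bar> \<le> K * (1 + g x ^ 2)" .
    qed (use K in auto)
    show ?thesis using key_real[OF n g nn pos Fm Fnn Fh i1 i2] i1 i2 unfolding cc by simp
  qed
  have hom: "\<And>t x. t > 0 \<Longrightarrow> r (t *\<^sub>R x) = t ^ (2*n) * r x" using forms_hom[OF r] by simp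
  have maxh: "max (t ^ (2*n) * a) 0 = t ^ (2*n) * max a 0" if "t > 0" for t a :: real
  proof -
    have "t ^ (2*n) > 0" using that by simp
    thus ?thesis by (auto simp: max_def mult_le_0_iff)
  qed
  have P: "(\<integral>x. max (r x) 0 * g x * exp (- g x) \<partial>lborel) = (1 + real CARD('d) / (2 * real n)) * (\<integral>x. max (r x) 0 * exp (- g x) \<partial>lborel)
     \<and> integrable lborel (\<lambda>x. max (r x) 0 * exp (- g x)) \<and> integrable lborel (\<lambda>x. max (r x) 0 * g x * exp (- g x))"
    by (rule part) (auto simp: hom maxh)
  have N: "(\<integral>x. max (- r x) 0 * g x * exp (- g x) \<partial>lborel) = (1 + real CARD('d) / (2 * real n)) * (\<integral>x. max (- r x) 0 * exp (- g x) \<partial>lborel)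
     \<and> integrable lborel (\<lambda>x. max (- r x) 0 * exp (- g x)) \<and> integrable lborel (\<lambda>x. max (- r x) 0 * g x * exp (- g x))"
  proof (rule part)
    fix t :: real and x assume t: "t > 0"
    have "max (t ^ (2*n) * (- r x)) 0 = t ^ (2*n) * max (- r x) 0" by (rule maxh[OF t])
    thus "max (- r (t *\<^sub>R x)) 0 = t ^ (2*n) * max (- r x) 0" using hom[OF t, of x] by simp
  qed auto
  have e1: "(\<lambda>x. r x * g x * exp (- g x)) = (\<lambda>x. max (r x) 0 * g x * exp (- g x) - max (- r x) 0 * g x * exp (- g x))"
    by (auto simp: fun_eq_iff max_def algebra_simps)
  have e2: "(\<lambda>x. r x * exp (- g x)) = (\<lambda>x. max (r x) 0 * exp (- g x) - max (- r x) 0 * exp (- g x))"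
    by (auto simp: fun_eq_iff max_def algebra_simps)
  have "(\<integral>x. r x * g x * exp (- g x) \<partial>lborel) = (\<integral>x. max (r x) 0 * g x * exp (- g x) \<partial>lborel) - (\<integral>x. max (- r x) 0 * g x * exp (- g x) \<partial>lborel)"
    unfolding e1 using P N by (intro Bochner_Integration.integral_diff) auto
  moreover have "(\<integral>x. r x * exp (- g x) \<partial>lborel) = (\<integral>x. max (r x) 0 * exp (- g x) \<partial>lborel) - (\<integral>x. max (- r x) 0 * exp (- g x) \<partial>lborel)"
    unfolding e2 using P N by (intro Bochner_Integration.integral_diff) auto
  ultimately show ?thesis using P N by (simp only: right_diff_distrib)
qed

end



context
  fixes g :: "real^'d::finite \<Rightarrow> real" and n :: nat
  assumes n: "n \<ge> 1" and g: "g \<in> forms (2*n)" and nn: "\<And>x. g x \<ge> 0" and pos: "\<And>x. g x = 0 \<Longrightarrow> x = 0"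
begin

lemma gm''[measurable]: "g \<in> borel_measurable borel" using forms_meas[OF g] .

lemma L2sq:
  assumes [measurable]: "f \<in> borel_measurable borel"
  shows "(L2norm g f)\<^sup>2 = (\<integral>x. (f x)\<^sup>2 * exp (- g x) \<partial>lborel)"
proof -
  have "0 \<le> (\<integral>x. (f x)\<^sup>2 * exp (- g x) \<partial>lborel)" by (intro integral_nonneg_AE) auto
  thus ?thesis unfolding L2norm_def by (simp add: mu_int[OF n g nn pos])
qed

lemma decomp:
  assumes p: "p \<in> forms (2*n)" and q0: "q0 \<in> forms (2*n)" and q0d: "\<And>x. q0 x = g x / c" and c: "c > 0"
    and ident: "\<And>r. r \<in> forms (2*n) \<Longrightarrow> (\<integral>x. r x * g x * exp (- g x) \<partial>lborel) = c * (\<integral>x. r x * exp (- g x) \<partial>lborel)"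
  shows "(\<integral>x. (p x - 1)\<^sup>2 * exp (- g x) \<partial>lborel)
       = (\<integral>x. (p x - q0 x) * (p x - q0 x) * exp (- g x) \<partial>lborel) + (\<integral>x. (q0 x - 1)\<^sup>2 * exp (- g x) \<partial>lborel)"
proof -
  define r where "r = (\<lambda>x. p x - q0 x)"
  have r: "r \<in> forms (2*n)" unfolding r_def by (rule forms_diff[OF p q0])
  note [measurable] = forms_meas[OF r] forms_meas[OF q0] forms_meas[OF p]
  have i1: "integrable lborel (\<lambda>x. r x * r x * exp (- g x))" by (rule int_prod[OF n g nn pos r r])
  have i2: "integrable lborel (\<lambda>x. r x * g x * exp (- g x))" by (rule int_prod[OF n g nn pos r g])
  have i3: "integrable lborel (\<lambda>x. r x * exp (- g x))" by (rule int_form[OF n g nn pos r])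
  have i4: "integrable lborel (\<lambda>x. (q0 x - 1)\<^sup>2 * exp (- g x))"
  proof -
    have "integrable lborel (\<lambda>x. q0 x * q0 x * exp (- g x) - 2 * (q0 x * exp (- g x)) + exp (- g x))"
      using int_prod[OF n g nn pos q0 q0] int_form[OF n g nn pos q0] int_e[OF n g nn pos] by auto
    thus ?thesis by (simp add: power2_eq_square algebra_simps)
  qed
  have pw: "(\<lambda>x. (p x - 1)\<^sup>2 * exp (- g x)) = (\<lambda>x. r x * r x * exp (- g x) + (2 / c) * (r x * g x * exp (- g x))
      - 2 * (r x * exp (- g x)) + (q0 x - 1)\<^sup>2 * exp (- g x))"
    using c by (auto simp: fun_eq_iff r_def q0d power2_eq_square field_simps)
  have "(\<integral>x. (p x - 1)\<^sup>2 * exp (- g x) \<partial>lborel)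
      = (\<integral>x. r x * r x * exp (- g x) \<partial>lborel) + (2 / c) * (\<integral>x. r x * g x * exp (- g x) \<partial>lborel)
        - 2 * (\<integral>x. r x * exp (- g x) \<partial>lborel) + (\<integral>x. (q0 x - 1)\<^sup>2 * exp (- g x) \<partial>lborel)"
    unfolding pw using i1 i2 i3 i4
    by (simp add: Bochner_Integration.integral_add Bochner_Integration.integral_diff)
  also have "(\<integral>x. r x * g x * exp (- g x) \<partial>lborel) = c * (\<integral>x. r x * exp (- g x) \<partial>lborel)" by (rule ident[OF r])
  finally show ?thesis using c unfolding r_def by simp
qed

end



context
  fixes g :: "real^'d::finite \<Rightarrow> real" and n :: nat
  assumes n: "n \<ge> 1" and g: "g \<in> forms (2*n)" and nn: "\<And>x. g x \<ge> 0" and pos: "\<And>x. g x = 0 \<Longrightarrow> x = 0"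
begin

lemma gm3[measurable]: "g \<in> borel_measurable borel" using forms_meas[OF g] .

lemma partII:
  assumes q: "q \<in> forms (2*n)" and eq: "L1norm g q = L1norm g g"
  shows "L2norm g g \<le> L2norm g q"
proof -
  note [measurable] = forms_meas[OF q]
  define H where "H x = \<bar>q x\<bar> / g x" for x
  have Hm[measurable]: "H \<in> borel_measurable borel" unfolding H_def by measurable
  have Hnn: "H x \<ge> 0" for x unfolding H_def using nn[of x] by simp
  have Hh: "H (t *\<^sub>R x) = t ^ 0 * H x" if t: "t > 0" for t x
  proof -
    have "t ^ (2*n) > 0" using t by simp
    thus ?thesis unfolding H_def forms_hom[OF q] forms_hom[OF g] using t by (simp add: abs_mult)
  qed
  obtain K where K: "K \<ge> 0" "\<And>x. \<bar>q x\<bar> \<le> K * g x" using form_le_g[OF n g nn pos q] by blast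
  obtain K2 where K2: "K2 \<ge> 0" "\<And>x. \<bar>q x\<bar> \<le> K2 * (1 + g x ^ 2)" using form_bound2[OF n g nn pos q] by blast
  have HK: "H x \<le> K" for x
  proof (cases "g x = 0")
    case True thus ?thesis unfolding H_def using K by simp
  next
    case False hence "g x > 0" using nn[of x] by simp
    thus ?thesis unfolding H_def using K(2)[of x] by (simp add: pos_divide_le_eq)
  qed
  have Hg: "\<bar>q x\<bar> = H x * g x" for x
  proof (cases "g x = 0")
    case True hence "x = 0" by (rule pos)
    thus ?thesis using forms_zero[OF q] n True by simp
  next
    case False thus ?thesis unfolding H_def by simp
  qed
  have one_le: "1 \<le> 1 + g x ^ 2" for x by simp
  have iH: "integrable lborel (\<lambda>x. H x * exp (- g x))"
    by (rule int_bound[OF n g nn pos Hm K(1)]) (use HK Hnn one_le K(1) in \<open>auto intro: order_trans[OF _ mult_left_mono[OF one_le]]\<close>)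
  have iHg: "integrable lborel (\<lambda>x. H x * g x * exp (- g x))"
  proof (rule int_bound[OF n g nn pos _ K2(1)])
    fix x show "\<bar>H x * g x\<bar> \<le> K2 * (1 + g x ^ 2)" using K2(2)[of x] Hg[of x] by simp
  qed measurable
  have iH2: "integrable lborel (\<lambda>x. (H x)\<^sup>2 * exp (- g x))"
  proof (rule int_bound[OF n g nn pos _ , of _ "K * K"])
    fix x
    have "\<bar>(H x)\<^sup>2\<bar> \<le> K * K" using HK[of x] Hnn[of x] by (simp add: power2_eq_square mult_mono)
    also have "\<dots> \<le> K * K * (1 + g x ^ 2)" using mult_left_mono[OF one_le[of x], of "K*K"] K(1) by simp
    finally show "\<bar>(H x)\<^sup>2\<bar> \<le> K * K * (1 + g x ^ 2)" .
  qed (use K in auto)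
  have iH2g: "integrable lborel (\<lambda>x. (H x)\<^sup>2 * g x * exp (- g x))"
  proof (rule int_bound[OF n g nn pos _ , of _ "K * K2"])
    fix x
    have "\<bar>(H x)\<^sup>2 * g x\<bar> = H x * \<bar>q x\<bar>" using Hg[of x] Hnn[of x] nn[of x] by (simp add: power2_eq_square abs_mult)
    also have "\<dots> \<le> K * (K2 * (1 + g x ^ 2))" using HK[of x] K2(2)[of x] Hnn[of x] K(1) by (intro mult_mono) auto
    finally show "\<bar>(H x)\<^sup>2 * g x\<bar> \<le> K * K2 * (1 + g x ^ 2)" by simp
  qed (use K K2 in auto)
  have iH2gg: "integrable lborel (\<lambda>x. (H x)\<^sup>2 * g x * g x * exp (- g x))"
  proof -
    have "integrable lborel (\<lambda>x. q x * q x * exp (- g x))" by (rule int_prod[OF n g nn pos q q])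
    moreover have "q x * q x = (H x)\<^sup>2 * g x * g x" for x
    proof -
      have "q x * q x = \<bar>q x\<bar> * \<bar>q x\<bar>" by simp
      thus ?thesis unfolding Hg[of x] by (simp add: power2_eq_square mult_ac)
    qed
    ultimately show ?thesis by simp
  qed
  have ie: "integrable lborel (\<lambda>x. exp (- g x))" by (rule int_e[OF n g nn pos])
  have ige: "integrable lborel (\<lambda>x. g x * exp (- g x))" by (rule int_form[OF n g nn pos g])
  have igge: "integrable lborel (\<lambda>x. g x * g x * exp (- g x))" by (rule int_prod[OF n g nn pos g g])
  define s where "s = real CARD('d) / (2 * real n)"
  define c' where "c' = (real CARD('d) + real (2*n)) / (2 * real n)"
  have s0: "s > 0" unfolding s_def using n by auto
  have c0: "c' > 0" unfolding c'_def using n by (auto intro!: divide_pos_pos add_pos_nonneg)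
  have K1: "(\<integral>x. H x * g x * exp (- g x) \<partial>lborel) = s * (\<integral>x. H x * exp (- g x) \<partial>lborel)"
    using key_real[OF n g nn pos Hm Hnn Hh iH iHg] unfolding s_def by simp
  have K2': "(\<integral>x. 1 * g x * exp (- g x) \<partial>lborel) = s * (\<integral>x. 1 * exp (- g x) \<partial>lborel)"
    using key_real[OF n g nn pos, of "\<lambda>_. 1" 0] ie ige unfolding s_def by simp
  have K3: "(\<integral>x. (H x)\<^sup>2 * g x * g x * exp (- g x) \<partial>lborel) = c' * (\<integral>x. (H x)\<^sup>2 * g x * exp (- g x) \<partial>lborel)"
    using key_real[OF n g nn pos, of "\<lambda>x. (H x)\<^sup>2 * g x" "2*n"] iH2g iH2gg Hh forms_hom[OF g] Hnn nn
    unfolding c'_def by (simp add: power_mult_distrib)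
  have K4: "(\<integral>x. (H x)\<^sup>2 * g x * exp (- g x) \<partial>lborel) = s * (\<integral>x. (H x)\<^sup>2 * exp (- g x) \<partial>lborel)"
    using key_real[OF n g nn pos, of "\<lambda>x. (H x)\<^sup>2" 0] iH2 iH2g Hh unfolding s_def by simp
  have K5: "(\<integral>x. g x * g x * exp (- g x) \<partial>lborel) = c' * (\<integral>x. g x * exp (- g x) \<partial>lborel)"
    using key_real[OF n g nn pos, of g "2*n"] ige igge forms_hom[OF g] nn unfolding c'_def by simp
  have L1q: "L1norm g q = (\<integral>x. H x * g x * exp (- g x) \<partial>lborel)"
    unfolding L1norm_def by (subst mu_int[OF n g nn pos]) (auto simp: Hg)
  have L1g: "L1norm g g = (\<integral>x. 1 * g x * exp (- g x) \<partial>lborel)"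
    unfolding L1norm_def by (subst mu_int[OF n g nn pos]) (auto simp: nn abs_of_nonneg)
  have AM: "(\<integral>x. H x * exp (- g x) \<partial>lborel) = (\<integral>x. exp (- g x) \<partial>lborel)"
    using eq s0 unfolding L1q L1g K1 K2' by simp
  have "0 \<le> (\<integral>x. (H x - 1)\<^sup>2 * exp (- g x) \<partial>lborel)" by (intro integral_nonneg_AE) auto
  also have "(\<lambda>x. (H x - 1)\<^sup>2 * exp (- g x)) = (\<lambda>x. (H x)\<^sup>2 * exp (- g x) - 2 * (H x * exp (- g x)) + exp (- g x))"
    by (auto simp: fun_eq_iff power2_eq_square algebra_simps)
  also have "(\<integral>x. (H x)\<^sup>2 * exp (- g x) - 2 * (H x * exp (- g x)) + exp (- g x) \<partial>lborel)
     = (\<integral>x. (H x)\<^sup>2 * exp (- g x) \<partial>lborel) - 2 * (\<integral>x. H x * exp (- g x) \<partial>lborel) + (\<integral>x. exp (- g x) \<partial>lborel)"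
    using iH2 iH ie by (simp add: Bochner_Integration.integral_add Bochner_Integration.integral_diff)
  finally have EH: "(\<integral>x. exp (- g x) \<partial>lborel) \<le> (\<integral>x. (H x)\<^sup>2 * exp (- g x) \<partial>lborel)" unfolding AM by simp
  have K2'': "(\<integral>x. g x * exp (- g x) \<partial>lborel) = s * (\<integral>x. exp (- g x) \<partial>lborel)"
    using K2' by simp
  have L2g: "(L2norm g g)\<^sup>2 = c' * (s * (\<integral>x. exp (- g x) \<partial>lborel))"
  proof -
    have "(L2norm g g)\<^sup>2 = (\<integral>x. (g x)\<^sup>2 * exp (- g x) \<partial>lborel)" by (rule L2sq[OF n g nn pos gm3])
    also have "(\<lambda>x. (g x)\<^sup>2 * exp (- g x)) = (\<lambda>x. g x * g x * exp (- g x))" by (simp add: power2_eq_square)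
    finally show ?thesis unfolding K5 K2'' .
  qed
  have L2q: "(L2norm g q)\<^sup>2 = c' * (s * (\<integral>x. (H x)\<^sup>2 * exp (- g x) \<partial>lborel))"
  proof -
    have "(L2norm g q)\<^sup>2 = (\<integral>x. (q x)\<^sup>2 * exp (- g x) \<partial>lborel)" by (rule L2sq[OF n g nn pos]) measurable
    also have "(\<lambda>x. (q x)\<^sup>2 * exp (- g x)) = (\<lambda>x. (H x)\<^sup>2 * g x * g x * exp (- g x))"
    proof
      fix x
      have "(q x)\<^sup>2 = \<bar>q x\<bar> * \<bar>q x\<bar>" by (simp add: power2_eq_square)
      thus "(q x)\<^sup>2 * exp (- g x) = (H x)\<^sup>2 * g x * g x * exp (- g x)" unfolding Hg[of x] by (simp add: power2_eq_square mult_ac)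
    qed
    finally show ?thesis unfolding K3 K4 .
  qed
  have A: "s * (\<integral>x. exp (- g x) \<partial>lborel) \<le> s * (\<integral>x. (H x)\<^sup>2 * exp (- g x) \<partial>lborel)"
    using EH s0 by (intro mult_left_mono) auto
  have "(L2norm g g)\<^sup>2 \<le> (L2norm g q)\<^sup>2" unfolding L2g L2q using mult_left_mono[OF A, of c'] c0 by simp
  moreover have "L2norm g q \<ge> 0" unfolding L2norm_def by simp
  ultimately show ?thesis by (rule power2_le_imp_le)
qed

end



theorem corollary2p4:
  fixes g :: "real^'d::finite \<Rightarrow> real" and n :: nat
  assumes "n \<ge> 1"
    and "g \<in> forms (2*n)"
    and "\<And>x. g x \<ge> 0"
    and "\<And>x. g x = 0 \<Longrightarrow> x = 0"
  defines "c \<equiv> 1 + real CARD('d) / (2 * real n)"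
  shows "(\<exists>!q. q \<in> forms (2*n) \<and>
              (\<forall>p\<in>forms (2*n). (L2norm g (\<lambda>x. q x - 1))\<^sup>2 \<le> (L2norm g (\<lambda>x. p x - 1))\<^sup>2))
       \<and> (\<forall>q. q \<in> forms (2*n) \<and>
              (\<forall>p\<in>forms (2*n). (L2norm g (\<lambda>x. q x - 1))\<^sup>2 \<le> (L2norm g (\<lambda>x. p x - 1))\<^sup>2)
            \<longrightarrow> g = (\<lambda>x. c * q x))
       \<and> (\<forall>q\<in>forms (2*n). L1norm g q = L1norm g g \<longrightarrow> L2norm g g \<le> L2norm g q)"
proof -
  note n = assms(1) and g = assms(2) and nn = assms(3) and pos = assms(4)
  note [measurable] = forms_meas[OF g]
  have c0: "c > 0" unfolding c_def by (auto intro!: add_pos_nonneg)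
  define q0 where "q0 = (\<lambda>x. g x / c)"
  have q0f: "q0 \<in> forms (2*n)"
  proof -
    have "(\<lambda>x. (1 / c) * g x) \<in> forms (2*n)" by (rule forms_scale[OF g])
    moreover have "(\<lambda>x. (1 / c) * g x) = q0" unfolding q0_def by auto
    ultimately show ?thesis by simp
  qed
  have ident: "\<And>r. r \<in> forms (2*n) \<Longrightarrow> (\<integral>x. r x * g x * exp (- g x) \<partial>lborel) = c * (\<integral>x. r x * exp (- g x) \<partial>lborel)"
    unfolding c_def by (rule form_identity[OF n g nn pos])
  have Dq: "(L2norm g (\<lambda>x. p x - 1))\<^sup>2 = (\<integral>x. (p x - 1)\<^sup>2 * exp (- g x) \<partial>lborel)" if p: "p \<in> forms (2*n)" for p
    by (intro L2sq[OF n g nn pos] borel_measurable_diff forms_meas[OF p] borel_measurable_const)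
  have dec: "(L2norm g (\<lambda>x. p x - 1))\<^sup>2 = (\<integral>x. (p x - q0 x) * (p x - q0 x) * exp (- g x) \<partial>lborel) + (L2norm g (\<lambda>x. q0 x - 1))\<^sup>2"
    if p: "p \<in> forms (2*n)" for p
    unfolding Dq[OF p] Dq[OF q0f] by (rule decomp[OF n g nn pos p q0f _ c0 ident]) (auto simp: q0_def)
  have nonneg: "0 \<le> (\<integral>x. (p x - q0 x) * (p x - q0 x) * exp (- g x) \<partial>lborel)" for p
    by (intro integral_nonneg_AE) auto
  have min: "\<forall>p\<in>forms (2*n). (L2norm g (\<lambda>x. q0 x - 1))\<^sup>2 \<le> (L2norm g (\<lambda>x. p x - 1))\<^sup>2"
  proof
    fix p :: "real^'d \<Rightarrow> real" assume p: "p \<in> forms (2*n)"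
    show "(L2norm g (\<lambda>x. q0 x - 1))\<^sup>2 \<le> (L2norm g (\<lambda>x. p x - 1))\<^sup>2"
      using dec[OF p] nonneg[of p] by linarith
  qed
  have uniq: "q = q0" if q: "q \<in> forms (2*n)"
    and qm: "\<forall>p\<in>forms (2*n). (L2norm g (\<lambda>x. q x - 1))\<^sup>2 \<le> (L2norm g (\<lambda>x. p x - 1))\<^sup>2" for q
  proof -
    define r where "r = (\<lambda>x. q x - q0 x)"
    have r: "r \<in> forms (2*n)" unfolding r_def by (rule forms_diff[OF q q0f])
    note [measurable] = forms_meas[OF r]
    have "(L2norm g (\<lambda>x. q x - 1))\<^sup>2 \<le> (L2norm g (\<lambda>x. q0 x - 1))\<^sup>2" using qm q0f by blast
    hence le: "(\<integral>x. r x * r x * exp (- g x) \<partial>lborel) \<le> 0" unfolding dec[OF q] r_def by simp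
    have ir: "integrable lborel (\<lambda>x. r x * r x * exp (- g x))" by (rule int_prod[OF n g nn pos r r])
    have "(\<integral>x. r x * r x * exp (- g x) \<partial>lborel) = 0" using le nonneg[of q] unfolding r_def by simp
    hence "AE x in lborel. r x * r x * exp (- g x) = 0"
      using integral_nonneg_eq_0_iff_AE[OF ir] by auto
    hence "AE x in lborel. r x = 0" by (rule AE_mp) (auto intro!: AE_I2)
    hence "r x = 0" for x by (rule cont_AE_zero[OF forms_cont[OF r]])
    thus ?thesis unfolding r_def by auto
  qed
  have P1: "\<exists>!q. q \<in> forms (2*n) \<and>
              (\<forall>p\<in>forms (2*n). (L2norm g (\<lambda>x. q x - 1))\<^sup>2 \<le> (L2norm g (\<lambda>x. p x - 1))\<^sup>2)"
  proof (rule ex1I[of _ q0])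
    show "q0 \<in> forms (2*n) \<and> (\<forall>p\<in>forms (2*n). (L2norm g (\<lambda>x. q0 x - 1))\<^sup>2 \<le> (L2norm g (\<lambda>x. p x - 1))\<^sup>2)"
      using q0f min by (rule conjI)
  next
    fix q :: "real^'d \<Rightarrow> real" assume "q \<in> forms (2*n) \<and> (\<forall>p\<in>forms (2*n). (L2norm g (\<lambda>x. q x - 1))\<^sup>2 \<le> (L2norm g (\<lambda>x. p x - 1))\<^sup>2)"
    thus "q = q0" using uniq by blast
  qed
  have P2: "\<forall>q. q \<in> forms (2*n) \<and>
              (\<forall>p\<in>forms (2*n). (L2norm g (\<lambda>x. q x - 1))\<^sup>2 \<le> (L2norm g (\<lambda>x. p x - 1))\<^sup>2)
            \<longrightarrow> g = (\<lambda>x. c * q x)"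
  proof (intro allI impI)
    fix q :: "real^'d \<Rightarrow> real" assume "q \<in> forms (2*n) \<and> (\<forall>p\<in>forms (2*n). (L2norm g (\<lambda>x. q x - 1))\<^sup>2 \<le> (L2norm g (\<lambda>x. p x - 1))\<^sup>2)"
    hence "q = q0" using uniq by blast
    thus "g = (\<lambda>x. c * q x)" using c0 unfolding q0_def by auto
  qed
  have P3: "\<forall>q\<in>forms (2*n). L1norm g q = L1norm g g \<longrightarrow> L2norm g g \<le> L2norm g q"
    using partII[OF n g nn pos] by blast
  from P1 P2 P3 show ?thesis by (intro conjI)
qed


end
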